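(* Let $g\in\mathbb{R}^d$ with $\|g\|=1$, and let $R,C,B,\eta>0$ with $R<1$ and $C>B$. For $w,r\in\mathbb{R}^d$ let $F(w,r)=\eta\|g+r\|^2-2\langle w,g+r\rangle$, and let $$F^*=\max\{F(w,r):\ \langle g,w\rangle\ge B,\ \|r\|^2\le R^2,\ \|w\|^2\le C^2\}.$$ Then $$F^*\le\max\left\{\eta(1+R^2)+2R\sqrt{\eta^2+C^2-2\eta B}-2B,\ \eta(R^2-1)\right\}.$$
   Context: $\|\cdot\|$ denotes the Euclidean norm and $\langle\cdot,\cdot\rangle$ the Euclidean inner product on $\mathbb{R}^d$. *)

theory Defs
  imports "HOL-Analysis.Analysis"
begin

end

theory Submission
  imports Defs
begin

theorem lemma7p1:
  fixes g :: "'a::euclidean_space" and R C B \<eta> :: real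
    and F :: "'a \<Rightarrow> 'a \<Rightarrow> real"
  assumes "norm g = 1"
    and "R > 0" and "C > 0" and "B > 0" and "\<eta> > 0"
    and "R < 1" and "C > B"
    and "\<And>w r. F w r = \<eta> * (norm (g + r))\<^sup>2 - 2 * (w \<bullet> (g + r))"
  shows "\<forall>w r. g \<bullet> w \<ge> B \<and> (norm r)\<^sup>2 \<le> R\<^sup>2 \<and> (norm w)\<^sup>2 \<le> C\<^sup>2 \<longrightarrow>
           F w r \<le> max (\<eta> * (1 + R\<^sup>2) + 2 * R * sqrt (\<eta>\<^sup>2 + C\<^sup>2 - 2 * \<eta> * B) - 2 * B)
                        (\<eta> * (R\<^sup>2 - 1))"
proof (intro allI impI)
  fix w r :: 'a
  assume h: "g \<bullet> w \<ge> B \<and> (norm r)\<^sup>2 \<le> R\<^sup>2 \<and> (norm w)\<^sup>2 \<le> C\<^sup>2"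
  have gg: "g \<bullet> g = 1" using assms(1) by (simp add: dot_square_norm)
  have nr: "norm r \<le> R" using h assms(2) by (meson abs_le_square_iff abs_of_pos abs_norm_cancel power2_le_imp_le less_imp_le)
  have e1: "(norm (g + r))\<^sup>2 = 1 + 2 * (g \<bullet> r) + (norm r)\<^sup>2"
    using gg by (simp add: power2_norm_eq_inner inner_add_left inner_add_right inner_commute)
  have Fe: "F w r = \<eta> + \<eta> * (norm r)\<^sup>2 - 2 * (g \<bullet> w) + 2 * ((\<eta> *\<^sub>R g - w) \<bullet> r)"
    using assms(8)[of w r] e1
    by (simp add: inner_add_right inner_diff_left algebra_simps inner_commute)
  have n2: "(norm (\<eta> *\<^sub>R g - w))\<^sup>2 = \<eta>\<^sup>2 - 2 * \<eta> * (g \<bullet> w) + (norm w)\<^sup>2"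
    using gg unfolding power2_norm_eq_inner
    by (simp add: inner_diff_left inner_diff_right inner_commute power2_eq_square algebra_simps)
  have n2b: "(norm (\<eta> *\<^sub>R g - w))\<^sup>2 \<le> \<eta>\<^sup>2 + C\<^sup>2 - 2 * \<eta> * B"
    using n2 h assms(5) by (smt (verit) mult_left_mono)
  have nb: "norm (\<eta> *\<^sub>R g - w) \<le> sqrt (\<eta>\<^sup>2 + C\<^sup>2 - 2 * \<eta> * B)"
    using n2b real_le_rsqrt by blast
  have "(\<eta> *\<^sub>R g - w) \<bullet> r \<le> norm (\<eta> *\<^sub>R g - w) * norm r"
    by (rule norm_cauchy_schwarz)
  also have "\<dots> \<le> sqrt (\<eta>\<^sup>2 + C\<^sup>2 - 2 * \<eta> * B) * R"
    using nb nr by (simp add: mult_mono')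
  finally have ip: "(\<eta> *\<^sub>R g - w) \<bullet> r \<le> R * sqrt (\<eta>\<^sup>2 + C\<^sup>2 - 2 * \<eta> * B)" by (simp add: mult.commute)
  have "\<eta> * (norm r)\<^sup>2 \<le> \<eta> * R\<^sup>2" using h assms(5) by simp
  hence "F w r \<le> \<eta> * (1 + R\<^sup>2) + 2 * R * sqrt (\<eta>\<^sup>2 + C\<^sup>2 - 2 * \<eta> * B) - 2 * B"
    using Fe ip h by (simp add: algebra_simps)
  thus "F w r \<le> max (\<eta> * (1 + R\<^sup>2) + 2 * R * sqrt (\<eta>\<^sup>2 + C\<^sup>2 - 2 * \<eta> * B) - 2 * B)
                        (\<eta> * (R\<^sup>2 - 1))" by linarith
qed

end
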